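(* Let $\beta>0$ and $0<c<1$. For every $\mathrm{v}\in\mathbb{Z}_{\geq 0}$ and every $x\in\mathbb{Z}_{\geq 0}$, $$\check{\xi}_{\mathrm{v}}(x;\beta,c)\;=\;{}_2F_1\Bigl(\genfrac{}{}{0pt}{}{-\mathrm{v},\,-x}{\beta}\Bigm|1-c\Bigr)\;=\;\sum_{k=0}^{\min(\mathrm{v},x)}\frac{(-\mathrm{v})_k(-x)_k}{(\beta)_k\,k!}(1-c)^k\;>\;0 .$$
   Context: $(a)_k=a(a+1)\cdots(a+k-1)$ is the Pochhammer symbol, $(a)_0=1$. The function $\check{\xi}_{\mathrm{v}}$ is the Meixner polynomial $M_{\mathrm{v}}(x;\beta,c^{-1})={}_2F_1(-\mathrm{v},-x;\beta;1-c)$ with the parameter $c$ replaced by $c^{-1}$ (the "virtual state polynomial" of the Meixner system). *)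

theory Defs
  imports Complex_Main
begin

text \<open>Terminating Gauss hypergeometric series 2F1(-n, b; c; z), n a nonnegative integer:
  the series terminates after the term k = n since (-n)_k = 0 for k > n.\<close>
definition hyp2F1_term :: "nat \<Rightarrow> real \<Rightarrow> real \<Rightarrow> real \<Rightarrow> real" where
  "hyp2F1_term n b c z =
     (\<Sum>k\<le>n. pochhammer (- real n) k * pochhammer b k / (pochhammer c k * fact k) * z ^ k)"

text \<open>Virtual state polynomial of the Meixner system:
  xi_check_v(x; beta, c) = M_v(x; beta, 1/c) = 2F1(-v, -x; beta; 1 - c).\<close>
definition xi_check :: "nat \<Rightarrow> real \<Rightarrow> real \<Rightarrow> real \<Rightarrow> real" where
  "xi_check v x \<beta> c = hyp2F1_term v (- x) \<beta> (1 - c)"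

end

theory Submission
  imports Defs
begin

lemma poch_nonneg_prod:
  assumes "k \<le> v" "k \<le> x"
  shows "pochhammer (- real v) k * pochhammer (- real x) k \<ge> 0"
proof -
  have a: "pochhammer (real v - real k + 1) k \<ge> 0"
    using assms by (intro pochhammer_nonneg) simp
  have b: "pochhammer (real x - real k + 1) k \<ge> 0"
    using assms by (intro pochhammer_nonneg) simp
  have "pochhammer (- real v) k * pochhammer (- real x) k
      = ((-1)^k * (-1)^k) * (pochhammer (real v - real k + 1) k * pochhammer (real x - real k + 1) k)"
    by (simp add: pochhammer_minus)
  also have "\<dots> = pochhammer (real v - real k + 1) k * pochhammer (real x - real k + 1) k"
    by (simp add: power_mult_distrib[symmetric])
  finally show ?thesis using a b by simp
qed

theorem mainTheorem1:
  fixes \<beta> c :: real and v x :: nat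
  assumes "\<beta> > 0" and "0 < c" and "c < 1"
  shows "xi_check v (real x) \<beta> c =
           (\<Sum>k\<le>min v x. pochhammer (- real v) k * pochhammer (- real x) k
                            / (pochhammer \<beta> k * fact k) * (1 - c) ^ k)
       \<and> (\<Sum>k\<le>min v x. pochhammer (- real v) k * pochhammer (- real x) k
                            / (pochhammer \<beta> k * fact k) * (1 - c) ^ k) > 0"
proof
  let ?f = "\<lambda>k. pochhammer (- real v) k * pochhammer (- real x) k
                            / (pochhammer \<beta> k * fact k) * (1 - c) ^ k"
  have "(\<Sum>k\<le>v. ?f k) = (\<Sum>k\<le>min v x. ?f k)"
  proof (rule sum.mono_neutral_right)
    show "\<forall>i\<in>{..v} - {..min v x}. ?f i = 0"
    proof
      fix i assume "i \<in> {..v} - {..min v x}"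
      hence "i > x" by auto
      hence "pochhammer (- real x) i = 0"
        using pochhammer_of_nat_eq_0_iff[of x i, where ?'a=real] by simp
      thus "?f i = 0" by simp
    qed
  qed auto
  thus "xi_check v (real x) \<beta> c = (\<Sum>k\<le>min v x. ?f k)"
    by (simp add: xi_check_def hyp2F1_term_def)
  have nn: "\<forall>k\<in>{..min v x}. ?f k \<ge> 0"
  proof
    fix k assume "k \<in> {..min v x}"
    hence "pochhammer (- real v) k * pochhammer (- real x) k \<ge> 0"
      by (intro poch_nonneg_prod) auto
    moreover have "pochhammer \<beta> k * fact k > 0"
      using assms pochhammer_pos[of \<beta> k] by simp
    moreover have "(1 - c) ^ k \<ge> 0" using assms by simp
    ultimately show "?f k \<ge> 0" by simp
  qed
  have "(\<Sum>k\<le>min v x. ?f k) = ?f 0 + (\<Sum>k\<in>{..min v x} - {0}. ?f k)"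
    by (subst sum.remove[of _ 0]) auto
  also have "\<dots> \<ge> 1"
  proof -
    have "(\<Sum>k\<in>{..min v x} - {0}. ?f k) \<ge> 0"
      using nn by (intro sum_nonneg) auto
    thus ?thesis by simp
  qed
  finally show "(\<Sum>k\<le>min v x. ?f k) > 0" by simp
qed

end
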